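(* There exists a quantum algorithm which, given the value $a>0$ of the initial success probability of $\mathcal A$, outputs a basis element $z$ with $\chi(z)=1$ with certainty (probability $1$), using a number of applications of $\mathcal A$ and $\mathcal A^{-1}$ (together with $\mathbf S_\chi$, $\mathbf S_0$-type phase operators and auxiliary gates not depending on $\chi$ or $\mathcal A$) that is in $\Theta(1/\sqrt a)$ in the worst case.
   Context: Let $\mathcal H$ be a finite-dimensional Hilbert space with a fixed orthonormal computational basis $\{|x\rangle\}$ indexed by a finite set of nonnegative integers containing $0$. Let $\chi:\mathbb Z\to\{0,1\}$ be a Boolean function; a basis state $|x\rangle$ is good if $\chi(x)=1$. For a state $|\Upsilon\rangle$, let $|\Upsilon_1\rangle$ be its orthogonal projection onto the span of the good basis states. Let $\mathcal A$ be a unitary on $\mathcal H$ (a quantum algorithm using no measurements), $|\Psi\rangle=\mathcal A|0\rangle$, and $a=\langle\Psi_1|\Psi_1\rangle$ its initial success probability. *)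

theory Defs
  imports Complex_Main
begin

text \<open>States of the finite-dimensional Hilbert space with computational basis
  indexed by a finite set X of nonnegative integers are represented as
  functions int \<Rightarrow> complex vanishing outside X; operators as matrices
  int \<Rightarrow> int \<Rightarrow> complex vanishing outside X \<times> X.\<close>

type_synonym state = "int \<Rightarrow> complex"
type_synonym op = "int \<Rightarrow> int \<Rightarrow> complex"

definition ket :: "int set \<Rightarrow> int \<Rightarrow> state" where
  "ket X x = (\<lambda>y. if y \<in> X \<and> y = x then 1 else 0)"

definition apply_op :: "int set \<Rightarrow> op \<Rightarrow> state \<Rightarrow> state" where
  "apply_op X M v = (\<lambda>i. if i \<in> X then (\<Sum>j\<in>X. M i j * v j) else 0)"

definition adjoint_op :: "op \<Rightarrow> op" where
  "adjoint_op M = (\<lambda>i j. cnj (M j i))"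

definition unitary_on :: "int set \<Rightarrow> op \<Rightarrow> bool" where
  "unitary_on X M \<longleftrightarrow>
     (\<forall>i j. (i \<notin> X \<or> j \<notin> X) \<longrightarrow> M i j = 0) \<and>
     (\<forall>i\<in>X. \<forall>j\<in>X. (\<Sum>k\<in>X. cnj (M k i) * M k j) = (if i = j then 1 else 0))"

definition good_prob :: "int set \<Rightarrow> (int \<Rightarrow> bool) \<Rightarrow> state \<Rightarrow> real" where
  "good_prob X \<chi> v = (\<Sum>x\<in>{x\<in>X. \<chi> x}. (cmod (v x))\<^sup>2)"

datatype gate = GateA | GateAinv | GateSchi real | GateS0 real

definition S_chi :: "(int \<Rightarrow> bool) \<Rightarrow> real \<Rightarrow> state \<Rightarrow> state" where
  "S_chi \<chi> \<phi> v = (\<lambda>x. if \<chi> x then cis \<phi> * v x else v x)"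

definition S_0 :: "real \<Rightarrow> state \<Rightarrow> state" where
  "S_0 \<phi> v = (\<lambda>x. if x = 0 then cis \<phi> * v x else v x)"

fun apply_gate :: "int set \<Rightarrow> (int \<Rightarrow> bool) \<Rightarrow> op \<Rightarrow> gate \<Rightarrow> state \<Rightarrow> state" where
  "apply_gate X \<chi> A GateA v = apply_op X A v"
| "apply_gate X \<chi> A GateAinv v = apply_op X (adjoint_op A) v"
| "apply_gate X \<chi> A (GateSchi \<phi>) v = S_chi \<chi> \<phi> v"
| "apply_gate X \<chi> A (GateS0 \<phi>) v = S_0 \<phi> v"

fun run :: "int set \<Rightarrow> (int \<Rightarrow> bool) \<Rightarrow> op \<Rightarrow> gate list \<Rightarrow> state \<Rightarrow> state" where
  "run X \<chi> A [] v = v"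
| "run X \<chi> A (g # gs) v = run X \<chi> A gs (apply_gate X \<chi> A g v)"

definition num_A_calls :: "gate list \<Rightarrow> nat" where
  "num_A_calls gs = length (filter (\<lambda>g. g = GateA \<or> g = GateAinv) gs)"

end

theory Submission
  imports Defs
begin


lemma sum_if_diag:
  assumes "finite X" "i \<in> X"
  shows "(\<Sum>j\<in>X. (if i = j then f j else (0::complex))) = f i"
  using assms by (simp add: sum.delta)

lemma AAdag:
  assumes fin: "finite X" and U: "unitary_on X A" and i: "i \<in> X" and j: "j \<in> X"
  shows "(\<Sum>k\<in>X. A i k * cnj (A j k)) = (if i = j then 1 else 0)"
proof -
  have orth: "\<And>k k'. k \<in> X \<Longrightarrow> k' \<in> X \<Longrightarrow> (\<Sum>i\<in>X. cnj (A i k) * A i k') = (if k = k' then 1 else 0)"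
    using U unfolding unitary_on_def by blast
  define P where "P i j = (\<Sum>k\<in>X. A i k * cnj (A j k))" for i j
  define n where "n = (of_nat (card X) :: complex)"
  have S1: "(\<Sum>i\<in>X. \<Sum>j\<in>X. P i j * cnj (P i j)) = n"
  proof -
    have "(\<Sum>i\<in>X. \<Sum>j\<in>X. P i j * cnj (P i j))
       = (\<Sum>i\<in>X. \<Sum>j\<in>X. \<Sum>k\<in>X. \<Sum>k'\<in>X. (cnj (A i k') * A i k) * (cnj (A j k) * A j k'))"
      unfolding P_def by (simp add: sum_product mult_ac)
    also have "\<dots> = (\<Sum>i\<in>X. \<Sum>k\<in>X. \<Sum>j\<in>X. \<Sum>k'\<in>X. cnj (A i k') * A i k * (cnj (A j k) * A j k'))"
      by (rule sum.cong[OF refl], rule sum.swap)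
    also have "\<dots> = (\<Sum>i\<in>X. \<Sum>k\<in>X. \<Sum>k'\<in>X. \<Sum>j\<in>X. cnj (A i k') * A i k * (cnj (A j k) * A j k'))"
      by (rule sum.cong[OF refl], rule sum.cong[OF refl], rule sum.swap)
    also have "\<dots> = (\<Sum>k\<in>X. \<Sum>i\<in>X. \<Sum>k'\<in>X. \<Sum>j\<in>X. cnj (A i k') * A i k * (cnj (A j k) * A j k'))"
      by (rule sum.swap)
    also have "\<dots> = (\<Sum>k\<in>X. \<Sum>k'\<in>X. \<Sum>i\<in>X. \<Sum>j\<in>X. cnj (A i k') * A i k * (cnj (A j k) * A j k'))"
      by (rule sum.cong[OF refl], rule sum.swap)
    also have "\<dots> = (\<Sum>k\<in>X. \<Sum>k'\<in>X. (\<Sum>i\<in>X. cnj (A i k') * A i k) * (\<Sum>j\<in>X. cnj (A j k) * A j k'))"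
      by (simp add: sum_product)
    also have "\<dots> = (\<Sum>k\<in>X. \<Sum>k'\<in>X. (if k = k' then 1 else 0))"
      by (intro sum.cong refl) (auto simp add: orth)
    also have "\<dots> = n" using fin by (simp add: n_def sum.delta)
    finally show ?thesis .
  qed
  have S2: "(\<Sum>i\<in>X. P i i) = n"
  proof -
    have "(\<Sum>i\<in>X. P i i) = (\<Sum>k\<in>X. \<Sum>i\<in>X. cnj (A i k) * A i k)"
      unfolding P_def by (subst sum.swap) (simp add: mult_ac)
    also have "\<dots> = n" using orth by (simp add: n_def)
    finally show ?thesis .
  qed
  define Q where "Q i j = (if i = j then 1 else 0) - P i j" for i j
  have "(\<Sum>i\<in>X. \<Sum>j\<in>X. Q i j * cnj (Q i j))
      = (\<Sum>i\<in>X. \<Sum>j\<in>X. (if i = j then 1 - P i j - cnj (P i j) else 0) + P i j * cnj (P i j))"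
    unfolding Q_def by (intro sum.cong refl) (auto simp: algebra_simps)
  also have "\<dots> = n - n - cnj n + n"
    using fin S1 S2 by (simp add: sum.distrib sum_subtractf sum.delta n_def flip: cnj_sum)
  also have "\<dots> = 0" by (simp add: n_def)
  finally have Z: "(\<Sum>i\<in>X. \<Sum>j\<in>X. Q i j * cnj (Q i j)) = 0" .
  have "(\<Sum>i\<in>X. \<Sum>j\<in>X. (cmod (Q i j))\<^sup>2) = 0"
  proof -
    have "complex_of_real (\<Sum>i\<in>X. \<Sum>j\<in>X. (cmod (Q i j))\<^sup>2) = 0"
      unfolding of_real_sum complex_norm_square by (rule Z)
    then show ?thesis by (simp only: of_real_eq_0_iff)
  qed
  then have "\<forall>i\<in>X. (\<Sum>j\<in>X. (cmod (Q i j))\<^sup>2) = 0"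
    using fin by (subst (asm) sum_nonneg_eq_0_iff) (auto intro: sum_nonneg)
  then have "(cmod (Q i j))\<^sup>2 = 0" using i j fin by (simp add: sum_nonneg_eq_0_iff)
  then have "Q i j = 0" by simp
  then show ?thesis unfolding Q_def P_def by (simp split: if_splits)
qed


lemma run_append: "run X \<chi> A (xs @ ys) v = run X \<chi> A ys (run X \<chi> A xs v)"
  by (induction xs arbitrary: v) auto

lemma Psi_eq:
  assumes "finite X" "0 \<in> X"
  shows "apply_op X A (ket X 0) = (\<lambda>i. if i \<in> X then A i 0 else 0)"
  using assms by (auto simp: apply_op_def ket_def fun_eq_iff if_distrib cong: if_cong)

lemma block:
  assumes fin: "finite X" and z: "0 \<in> X" and U: "unitary_on X A"
    and vz: "\<And>i. i \<notin> X \<Longrightarrow> v i = 0"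
  shows "run X \<chi> A [GateAinv, GateS0 \<phi>, GateA] v
     = (\<lambda>i. v i + (cis \<phi> - 1) * (\<Sum>j\<in>X. cnj (A j 0) * v j) * apply_op X A (ket X 0) i)"
proof
  fix i
  define u where "u k = (if k \<in> X then \<Sum>j\<in>X. cnj (A j k) * v j else 0)" for k
  have u: "apply_op X (adjoint_op A) v = u"
    by (simp add: apply_op_def adjoint_op_def u_def fun_eq_iff)
  have "run X \<chi> A [GateAinv, GateS0 \<phi>, GateA] v = apply_op X A (S_0 \<phi> u)"
    by (simp add: u)
  moreover have "apply_op X A (S_0 \<phi> u) i = v i + (cis \<phi> - 1) * u 0 * apply_op X A (ket X 0) i"
  proof (cases "i \<in> X")
    case False
    then show ?thesis by (simp add: apply_op_def vz)
  next
    case True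
    have "apply_op X A (S_0 \<phi> u) i = (\<Sum>k\<in>X. A i k * u k + (if k = 0 then (cis \<phi> - 1) * A i k * u k else 0))"
      using True by (simp add: apply_op_def S_0_def algebra_simps) (intro sum.cong refl, simp add: algebra_simps)
    also have "\<dots> = (\<Sum>k\<in>X. A i k * u k) + (cis \<phi> - 1) * A i 0 * u 0"
      using fin z by (simp add: sum.distrib)
    also have "(\<Sum>k\<in>X. A i k * u k) = (\<Sum>k\<in>X. \<Sum>j\<in>X. A i k * cnj (A j k) * v j)"
      by (intro sum.cong refl) (simp add: u_def sum_distrib_left mult_ac)
    also have "\<dots> = (\<Sum>j\<in>X. (\<Sum>k\<in>X. A i k * cnj (A j k)) * v j)"
      by (subst sum.swap) (simp add: sum_distrib_right)
    also have "\<dots> = (\<Sum>j\<in>X. (if i = j then v j else 0))"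
      by (intro sum.cong refl) (simp add: AAdag[OF fin U True])
    also have "\<dots> = v i" using fin True by simp
    finally show ?thesis using True fin z by (simp add: Psi_eq mult_ac)
  qed
  ultimately show "run X \<chi> A [GateAinv, GateS0 \<phi>, GateA] v i
     = v i + (cis \<phi> - 1) * (\<Sum>j\<in>X. cnj (A j 0) * v j) * apply_op X A (ket X 0) i"
    using z by (simp add: u_def)
qed

definition comb :: "(int \<Rightarrow> bool) \<Rightarrow> state \<Rightarrow> complex \<Rightarrow> complex \<Rightarrow> state" where
  "comb \<chi> P \<alpha> \<beta> = (\<lambda>i. if \<chi> i then \<alpha> * P i else \<beta> * P i)"

lemma col_norm:
  assumes "unitary_on X A" "0 \<in> X"
  shows "(\<Sum>j\<in>X. cnj (A j 0) * A j 0) = 1"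
  using assms unfolding unitary_on_def by auto

lemma inner_comb:
  assumes fin: "finite X" and z: "0 \<in> X" and U: "unitary_on X A"
  shows "(\<Sum>j\<in>X. cnj (A j 0) * comb \<chi> (apply_op X A (ket X 0)) \<alpha> \<beta> j)
     = \<alpha> * good_prob X \<chi> (apply_op X A (ket X 0)) + \<beta> * (1 - good_prob X \<chi> (apply_op X A (ket X 0)))"
proof -
  define g where "g j = cnj (A j 0) * A j 0" for j
  have gp: "complex_of_real (good_prob X \<chi> (apply_op X A (ket X 0))) = (\<Sum>j\<in>X \<inter> {x. \<chi> x}. g j)"
    unfolding good_prob_def of_real_sum using fin z
    by (intro sum.cong) (auto simp: Psi_eq g_def complex_norm_square[symmetric] mult.commute simp del: of_real_power)
  have tot: "(\<Sum>j\<in>X. g j) = 1" using col_norm[OF U z] by (simp add: g_def)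
  have split: "(\<Sum>j\<in>X. g j) = (\<Sum>j\<in>X \<inter> {x. \<chi> x}. g j) + (\<Sum>j\<in>X \<inter> - {x. \<chi> x}. g j)"
    using sum.Int_Diff[OF fin, of g "{x. \<chi> x}"] by (simp add: Diff_eq)
  have "(\<Sum>j\<in>X. cnj (A j 0) * comb \<chi> (apply_op X A (ket X 0)) \<alpha> \<beta> j)
      = (\<Sum>j\<in>X. if \<chi> j then \<alpha> * g j else \<beta> * g j)"
    using fin z by (intro sum.cong) (auto simp: comb_def Psi_eq g_def)
  also have "\<dots> = \<alpha> * (\<Sum>j\<in>X \<inter> {x. \<chi> x}. g j) + \<beta> * (\<Sum>j\<in>X \<inter> - {x. \<chi> x}. g j)"
    using fin by (simp add: sum.If_cases sum_distrib_left)
  also have "(\<Sum>j\<in>X \<inter> - {x. \<chi> x}. g j) = 1 - complex_of_real (good_prob X \<chi> (apply_op X A (ket X 0)))"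
    using gp tot split by (simp add: algebra_simps)
  finally show ?thesis unfolding gp[symmetric] by simp
qed

lemma step:
  fixes \<chi> :: "int \<Rightarrow> bool"
  assumes fin: "finite X" and z: "0 \<in> X" and U: "unitary_on X A"
  defines "P \<equiv> apply_op X A (ket X 0)"
  defines "a \<equiv> complex_of_real (good_prob X \<chi> P)"
  shows "run X \<chi> A [GateSchi \<phi>1, GateAinv, GateS0 \<phi>2, GateA] (comb \<chi> P \<alpha> \<beta>)
     = comb \<chi> P (cis \<phi>1 * \<alpha> + (cis \<phi>2 - 1) * (cis \<phi>1 * \<alpha> * a + \<beta> * (1 - a)))
                 (\<beta> + (cis \<phi>2 - 1) * (cis \<phi>1 * \<alpha> * a + \<beta> * (1 - a)))"
proof -
  have S: "S_chi \<chi> \<phi>1 (comb \<chi> P \<alpha> \<beta>) = comb \<chi> P (cis \<phi>1 * \<alpha>) \<beta>"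
    by (auto simp: S_chi_def comb_def fun_eq_iff)
  have vz: "\<And>i. i \<notin> X \<Longrightarrow> comb \<chi> P (cis \<phi>1 * \<alpha>) \<beta> i = 0"
    using fin z by (simp add: comb_def P_def Psi_eq)
  have "run X \<chi> A [GateSchi \<phi>1, GateAinv, GateS0 \<phi>2, GateA] (comb \<chi> P \<alpha> \<beta>)
      = run X \<chi> A [GateAinv, GateS0 \<phi>2, GateA] (comb \<chi> P (cis \<phi>1 * \<alpha>) \<beta>)"
    by (simp add: S)
  also have "\<dots> = comb \<chi> P (cis \<phi>1 * \<alpha> + (cis \<phi>2 - 1) * (cis \<phi>1 * \<alpha> * a + \<beta> * (1 - a)))
                 (\<beta> + (cis \<phi>2 - 1) * (cis \<phi>1 * \<alpha> * a + \<beta> * (1 - a)))"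
    apply (subst block[OF fin z U])
     apply (rule vz, assumption)
    apply (subst inner_comb[OF fin z U, folded P_def])
    by (auto simp: comb_def fun_eq_iff a_def P_def algebra_simps)
  finally show ?thesis .
qed



lemma inv_step:
  fixes a :: real and \<alpha> \<beta> :: complex
  shows "(cmod (cis p1 * \<alpha> + (cis p2 - 1) * (cis p1 * \<alpha> * of_real a + \<beta> * (1 - of_real a))))\<^sup>2 * a
     + (cmod (\<beta> + (cis p2 - 1) * (cis p1 * \<alpha> * of_real a + \<beta> * (1 - of_real a))))\<^sup>2 * (1 - a)
     = (cmod \<alpha>)\<^sup>2 * a + (cmod \<beta>)\<^sup>2 * (1 - a)" (is "?l = ?r")
proof -
  have u: "cis p1 * cnj (cis p1) = 1" "cis p2 * cnj (cis p2) = 1"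
    by (simp_all add: cis_cnj cis_mult)
  define u where "u = cis p1"
  define w where "w = cis p2"
  define A where "A = complex_of_real a"
  have cA: "cnj A = A" by (simp add: A_def)
  have "complex_of_real (?l) = complex_of_real (?r)"
    unfolding of_real_add of_real_mult complex_norm_square of_real_diff of_real_1
    using u unfolding u_def[symmetric] w_def[symmetric] A_def[symmetric]
    unfolding complex_cnj_add complex_cnj_mult complex_cnj_diff complex_cnj_one cA
    by algebra
  then show ?thesis by (simp only: of_real_eq_iff)
qed

lemma std_real:
  fixes s0 c0 \<theta> a e t :: real
  assumes "s0 = sin \<theta>" "c0 = cos \<theta>" "s0 > 0" "c0 > 0" "a = s0\<^sup>2"
  shows "-(e*sin t/s0) + 2*(e*sin t/s0)*a - 2*(e*cos t/c0)*(1-a) = -e*sin(t+2*\<theta>)/s0"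
    and "(e*cos t/c0) + 2*(e*sin t/s0)*a - 2*(e*cos t/c0)*(1-a) = -e*cos(t+2*\<theta>)/c0"
proof -
  have sc: "s0\<^sup>2 + c0\<^sup>2 = 1" using assms sin_cos_squared_add[of \<theta>] by simp
  have c: "1 - a = c0\<^sup>2" using sc assms by (simp add: algebra_simps)
  have e1: "sin(t+2*\<theta>) = sin t * (c0\<^sup>2 - s0\<^sup>2) + cos t * (2*s0*c0)"
    using assms by (simp add: sin_add sin_double cos_double)
  have e2: "cos(t+2*\<theta>) = cos t * (c0\<^sup>2 - s0\<^sup>2) - sin t * (2*s0*c0)"
    using assms by (simp add: cos_add sin_double cos_double)
  have c2: "c0\<^sup>2 = 1 - s0\<^sup>2" using sc by simp
  show "-(e*sin t/s0) + 2*(e*sin t/s0)*a - 2*(e*cos t/c0)*(1-a) = -e*sin(t+2*\<theta>)/s0"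
    unfolding c e1 using assms(3,4,5) sc
    by (simp add: field_simps power2_eq_square) algebra
  show "(e*cos t/c0) + 2*(e*sin t/s0)*a - 2*(e*cos t/c0)*(1-a) = -e*cos(t+2*\<theta>)/c0"
    unfolding c e2 using assms(3,4,5) sc
    by (simp add: field_simps power2_eq_square) algebra
qed

definition th :: "real \<Rightarrow> real" where "th a = arcsin (sqrt a)"
definition mm :: "real \<Rightarrow> nat" where "mm a = nat \<lfloor>pi / (4 * th a) - 1/2\<rfloor>"
definition tt :: "real \<Rightarrow> real" where "tt a = (2 * real (mm a) + 1) * th a"
definition KK :: "real \<Rightarrow> real" where "KK a = sin (tt a) * sqrt a * sqrt (1 - a)"
definition LL :: "real \<Rightarrow> real" where "LL a = cos (tt a) * (1 - a)"
definition rr :: "real \<Rightarrow> real" where "rr a = (cos (tt a) / 2 - LL a) / KK a"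
definition uu :: "real \<Rightarrow> complex" where "uu a = Complex (rr a) (sqrt (1 - (rr a)\<^sup>2))"
definition ww :: "real \<Rightarrow> complex" where "ww a = uu a * of_real (KK a) + of_real (LL a)"
definition p1 :: "real \<Rightarrow> real" where "p1 a = Arg (uu a)"
definition p2 :: "real \<Rightarrow> real" where "p2 a = Arg (1 - of_real (cos (tt a)) / ww a)"

lemma th_facts:
  assumes "0 < a" "a < 1"
  shows "sin (th a) = sqrt a" "cos (th a) = sqrt (1 - a)" "0 < th a" "th a < pi/2"
proof -
  have s: "0 < sqrt a" "sqrt a < 1" using assms by auto
  show "sin (th a) = sqrt a" unfolding th_def by (rule sin_arcsin) (use s in linarith)+
  have "cos (th a) = sqrt (1 - (sqrt a)\<^sup>2)" unfolding th_def by (rule cos_arcsin) (use s in linarith)+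
  then show "cos (th a) = sqrt (1 - a)" using assms by simp
  have "arcsin 0 < arcsin (sqrt a)" by (rule arcsin_less_arcsin) (use s in linarith)+
  then show "0 < th a" unfolding th_def by simp
  have "arcsin (sqrt a) < arcsin 1" by (rule arcsin_less_arcsin) (use s in linarith)+
  then show "th a < pi/2" unfolding th_def by simp
qed

lemma tt_facts:
  assumes "0 < a" "a < 1"
  shows "th a \<le> tt a" "tt a \<le> pi/2" "pi/2 < tt a + 2 * th a"
    "real (mm a) \<le> pi / (4 * th a) - 1/2" "pi / (4 * th a) - 3/2 < real (mm a)"
proof -
  note f = th_facts[OF assms]
  have ge: "pi / (4 * th a) - 1/2 \<ge> 0" using f by (simp add: field_simps)
  then have m: "real (mm a) = of_int \<lfloor>pi / (4 * th a) - 1/2\<rfloor>" unfolding mm_def by simp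
  show m1: "real (mm a) \<le> pi / (4 * th a) - 1/2" using m by linarith
  show m2: "pi / (4 * th a) - 3/2 < real (mm a)" using m by linarith
  show "th a \<le> tt a" unfolding tt_def using f by simp
  have "(2 * real (mm a) + 1) \<le> pi / (2 * th a)" using m1 by (simp add: field_simps)
  then have "(2 * real (mm a) + 1) * th a \<le> pi / (2 * th a) * th a" using f by (intro mult_right_mono) auto
  then show "tt a \<le> pi/2" unfolding tt_def using f by simp
  have "pi / (2 * th a) < 2 * real (mm a) + 3" using m2 by (simp add: field_simps)
  then have "pi / (2 * th a) * th a < (2 * real (mm a) + 3) * th a" using f by (intro mult_strict_right_mono) auto
  then show "pi/2 < tt a + 2 * th a" unfolding tt_def using f by (simp add: algebra_simps)
qed


lemma gadget_facts:
  assumes a: "0 < a" "a < 1"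
  shows "cis (p1 a) = uu a" "ww a \<noteq> 0" "cis (p2 a) = 1 - of_real (cos (tt a)) / ww a"
proof -
  note f = th_facts[OF a] and g = tt_facts[OF a]
  define t where "t = tt a"
  define \<theta> where "\<theta> = th a"
  define s0 where "s0 = sqrt a"
  define c0 where "c0 = sqrt (1 - a)"
  have s0: "s0 > 0" "s0 = sin \<theta>" and c0: "c0 > 0" "c0 = cos \<theta>" and th: "0 < \<theta>" "\<theta> < pi/2"
    using a f by (auto simp: s0_def c0_def \<theta>_def)
  have tb: "\<theta> \<le> t" "t \<le> pi/2" "pi/2 < t + 2*\<theta>" using g by (auto simp: t_def \<theta>_def)
  have sint: "sin t > 0" using tb th by (intro sin_gt_zero) auto
  have cost: "cos t \<ge> 0" using tb th by (intro cos_ge_zero) auto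
  have K: "KK a = sin t * s0 * c0" unfolding KK_def t_def s0_def c0_def ..
  have Kpos: "KK a > 0" unfolding K using sint s0 c0 by simp
  have L: "LL a = cos t * c0\<^sup>2" unfolding LL_def t_def c0_def using a by simp
  have sc: "s0\<^sup>2 + c0\<^sup>2 = 1" using s0 c0 by simp
  have c1: "cos (t + 2*\<theta>) \<le> 0"
  proof -
    have "0 \<le> cos (t + 2*\<theta> - pi)" using tb th by (intro cos_ge_zero) auto
    then show ?thesis by simp
  qed
  have c2: "0 \<le> cos (t - 2*\<theta>)" using tb th by (intro cos_ge_zero) auto
  have num: "cos t / 2 - LL a = - cos t * (c0\<^sup>2 - s0\<^sup>2) / 2"
  proof -
    have "cos t * (c0\<^sup>2 + s0\<^sup>2) = cos t" using sc by (simp add: add.commute)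
    then show ?thesis unfolding L by (simp add: algebra_simps)
  qed
  have "\<bar>cos t / 2 - LL a\<bar> \<le> KK a"
  proof -
    define XX where "XX = cos t * (c0\<^sup>2 - s0\<^sup>2)"
    define YY where "YY = sin t * s0 * c0"
    have d: "sin (2*\<theta>) = 2 * s0 * c0" "cos (2*\<theta>) = c0\<^sup>2 - s0\<^sup>2"
      using s0 c0 by (simp_all add: sin_double cos_double)
    have e1: "cos (t + 2*\<theta>) = XX - 2 * YY"
      unfolding XX_def YY_def cos_add d by (simp add: algebra_simps)
    have e2: "cos (t - 2*\<theta>) = XX + 2 * YY"
      unfolding XX_def YY_def cos_diff d by (simp add: algebra_simps)
    have "\<bar>- XX / 2\<bar> \<le> YY" using c1 c2 unfolding e1 e2 abs_le_iff by linarith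
    then show ?thesis unfolding num K XX_def YY_def by simp
  qed
  moreover have "\<bar>rr a\<bar> = \<bar>cos t / 2 - LL a\<bar> / KK a"
    unfolding rr_def t_def abs_divide using Kpos by simp
  ultimately have rb: "\<bar>rr a\<bar> \<le> 1" using Kpos by (simp add: divide_le_eq_1_pos)
  then have r2: "(rr a)\<^sup>2 \<le> 1" by (simp add: abs_square_le_1)
  have nu: "cmod (uu a) = 1" unfolding uu_def complex_norm using r2 by simp
  then show "cis (p1 a) = uu a" unfolding p1_def
    by (subst cis_Arg) (auto simp: sgn_div_norm)
  have Rew: "Re (ww a) = cos t / 2" unfolding ww_def uu_def rr_def using Kpos
    by (simp add: t_def)
  have Imw: "Im (ww a) = sqrt (1 - (rr a)\<^sup>2) * KK a" unfolding ww_def uu_def by simp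
  show wnz: "ww a \<noteq> 0"
  proof
    assume w0: "ww a = 0"
    then have "cos t = 0" using Rew by simp
    then have "rr a = 0" unfolding rr_def L t_def[symmetric] by simp
    then have "Im (ww a) = KK a" using Imw by simp
    then show False using w0 Kpos by simp
  qed
  have "cmod (ww a - of_real (cos t)) = cmod (ww a)"
    unfolding cmod_def using Rew by (simp add: power2_eq_square algebra_simps)
  moreover have "1 - of_real (cos (tt a)) / ww a = (ww a - of_real (cos t)) / ww a"
    using wnz by (simp add: t_def field_simps)
  ultimately have "cmod (1 - of_real (cos (tt a)) / ww a) = 1"
    using wnz by (simp add: norm_divide)
  then show "cis (p2 a) = 1 - of_real (cos (tt a)) / ww a" unfolding p2_def
    by (subst cis_Arg) (auto simp: sgn_div_norm)
qed


lemma gadget_zero: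
  assumes a: "0 < a" "a < 1"
  shows "complex_of_real (e * cos (tt a) / sqrt (1 - a)) + (cis (p2 a) - 1) *
     (cis (p1 a) * complex_of_real (e * sin (tt a) / sqrt a) * complex_of_real a
       + complex_of_real (e * cos (tt a) / sqrt (1 - a)) * (1 - complex_of_real a)) = 0"
proof -
  note gf = gadget_facts[OF a]
  define s0 where "s0 = sqrt a"
  define c0 where "c0 = sqrt (1 - a)"
  define t where "t = tt a"
  have s0: "s0 > 0" "a = s0 * s0" using a by (auto simp: s0_def)
  have c0: "c0 > 0" "1 - a = c0 * c0" using a by (auto simp: c0_def)
  have ca: "1 - complex_of_real a = of_real (c0 * c0)" using c0(2)
    by (metis of_real_1 of_real_diff)
  have h1: "cis (p1 a) * complex_of_real (e * sin t / s0) * complex_of_real a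
       + complex_of_real (e * cos t / c0) * (1 - complex_of_real a) = of_real (e / c0) * ww a"
  proof -
    have K: "KK a = sin t * s0 * c0" unfolding KK_def s0_def c0_def t_def ..
    have L: "LL a = cos t * (c0 * c0)" unfolding LL_def t_def c0(2) ..
    have A: "complex_of_real a = of_real s0 * of_real s0" using s0(2) by simp
    show ?thesis
      unfolding ca unfolding gf(1) ww_def K L A using s0(1) c0(1)
      by (simp add: field_simps)
  qed
  show ?thesis
    unfolding s0_def[symmetric] c0_def[symmetric] t_def[symmetric] h1 gf(3)
    using gf(2) c0 by (simp add: t_def field_simps)
qed


lemma xcos_le_sin:
  fixes x :: real
  assumes "0 \<le> x" "x \<le> pi"
  shows "x * cos x \<le> sin x"
proof -
  have "(\<lambda>y. sin y - y * cos y) 0 \<le> (\<lambda>y. sin y - y * cos y) x"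
  proof (rule DERIV_nonneg_imp_increasing_open[OF assms(1)])
    fix y :: real assume y: "0 < y" "y < x"
    have "((\<lambda>y. sin y - y * cos y) has_real_derivative (cos y - (1 * cos y + y * - sin y))) (at y)"
      by (intro derivative_eq_intros) auto
    moreover have "0 \<le> cos y - (1 * cos y + y * - sin y)"
      using y assms by (simp add: sin_ge_zero)
    ultimately show "\<exists>d. ((\<lambda>y. sin y - y * cos y) has_real_derivative d) (at y) \<and> 0 \<le> d" by blast
  next
    show "continuous_on {0..x} (\<lambda>y. sin y - y * cos y)" by (intro continuous_intros)
  qed
  then show ?thesis by simp
qed

lemma count_bounds:
  assumes a: "0 < a" "a < 1"
  shows "1/2 / sqrt a \<le> 2 * real (mm a) + 3" "2 * real (mm a) + 3 \<le> 4 / sqrt a"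
proof -
  note f = th_facts[OF a] and g = tt_facts[OF a]
  define \<theta> where "\<theta> = th a"
  have th: "0 < \<theta>" "\<theta> < pi/2" "sin \<theta> = sqrt a" "cos \<theta> = sqrt (1 - a)" using f by (auto simp: \<theta>_def)
  have sa: "0 < sqrt a" "sqrt a \<le> 1" using a by auto
  have m1: "2 * real (mm a) + 3 \<le> pi / (2 * \<theta>) + 2" using g(4) by (simp add: \<theta>_def field_simps)
  have m2: "pi / (2 * \<theta>) < 2 * real (mm a) + 3" using g(5) by (simp add: \<theta>_def field_simps)
  have "sqrt a \<le> \<theta>" using sin_x_le_x[of \<theta>] th by simp
  then have "pi / (2 * \<theta>) \<le> pi / (2 * sqrt a)" using sa th by (intro divide_left_mono) auto
  moreover have "2 \<le> 2 / sqrt a" using sa by (simp add: field_simps)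
  moreover have "pi / (2 * sqrt a) + 2 / sqrt a \<le> 4 / sqrt a"
    using sa pi_less_4 by (simp add: field_simps)
  ultimately show "2 * real (mm a) + 3 \<le> 4 / sqrt a" using m1 by linarith
  show "1/2 / sqrt a \<le> 2 * real (mm a) + 3"
  proof (cases "a \<ge> 1/4")
    case True
    then have "1/2 \<le> sqrt a" by (intro real_le_rsqrt) (simp add: power2_eq_square)
    then have "1/2 / sqrt a \<le> 1" using sa by (simp add: field_simps)
    then show ?thesis by simp
  next
    case False
    then have "1/2 < sqrt (1 - a)" by (intro real_less_rsqrt) (simp add: power2_eq_square)
    then have "\<theta> * (1/2) \<le> \<theta> * cos \<theta>" using th by simp
    also have "\<dots> \<le> sqrt a" using xcos_le_sin[of \<theta>] th by simp
    finally have "\<theta> \<le> 2 * sqrt a" by simp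
    then have "pi / (4 * sqrt a) \<le> pi / (2 * \<theta>)" using sa th by (intro divide_left_mono) auto
    moreover have "1/2 / sqrt a \<le> pi / (4 * sqrt a)" using sa pi_ge_two by (simp add: field_simps)
    ultimately show ?thesis using m2 by linarith
  qed
qed


definition stdblk :: "gate list" where "stdblk = [GateSchi pi, GateAinv, GateS0 pi, GateA]"
definition gad :: "real \<Rightarrow> gate list" where "gad a = [GateSchi (p1 a), GateAinv, GateS0 (p2 a), GateA]"
definition alg :: "real \<Rightarrow> gate list" where
  "alg a = (if a < 1 then GateA # concat (replicate (mm a) stdblk) @ gad a else [GateA])"

lemma count_rep: "length (filter P (concat (replicate m xs))) = m * length (filter P xs)"
  by (induction m) auto

lemma num_alg: "num_A_calls (alg a) = (if a < 1 then 2 * mm a + 3 else 1)"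
  by (simp add: alg_def num_A_calls_def count_rep stdblk_def gad_def)

lemma good_prob_comb:
  "good_prob X \<chi> (comb \<chi> P \<alpha> \<beta>) = (cmod \<alpha>)\<^sup>2 * good_prob X \<chi> P"
  unfolding good_prob_def comb_def
  by (simp add: sum_distrib_left norm_mult power_mult_distrib)

lemma good_prob_le1:
  assumes fin: "finite X" and z: "0 \<in> X" and U: "unitary_on X A"
  shows "good_prob X \<chi> (apply_op X A (ket X 0)) \<le> 1"
proof -
  have "complex_of_real (\<Sum>j\<in>X. (cmod (A j 0))\<^sup>2) = (\<Sum>j\<in>X. cnj (A j 0) * A j 0)"
    unfolding of_real_sum complex_norm_square by (simp add: mult.commute)
  then have tot: "(\<Sum>j\<in>X. (cmod (A j 0))\<^sup>2) = 1" using col_norm[OF U z] by (simp only: of_real_eq_1_iff)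
  have "good_prob X \<chi> (apply_op X A (ket X 0)) = (\<Sum>j\<in>{x\<in>X. \<chi> x}. (cmod (A j 0))\<^sup>2)"
    unfolding good_prob_def using fin z by (intro sum.cong) (auto simp: Psi_eq)
  also have "\<dots> \<le> (\<Sum>j\<in>X. (cmod (A j 0))\<^sup>2)" using fin by (intro sum_mono2) auto
  finally show ?thesis using tot by simp
qed

lemma iter:
  fixes \<chi> :: "int \<Rightarrow> bool"
  assumes fin: "finite X" and z: "0 \<in> X" and U: "unitary_on X A"
  defines "P \<equiv> apply_op X A (ket X 0)"
  defines "a \<equiv> good_prob X \<chi> P"
  assumes a: "0 < a" "a < 1"
  shows "run X \<chi> A (concat (replicate j stdblk))
     (comb \<chi> P (of_real (e * sin t / sqrt a)) (of_real (e * cos t / sqrt (1 - a))))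
   = comb \<chi> P (of_real ((-1)^j * e * sin (t + 2 * real j * th a) / sqrt a))
       (of_real ((-1)^j * e * cos (t + 2 * real j * th a) / sqrt (1 - a)))"
proof (induction j arbitrary: e t)
  case 0
  then show ?case by simp
next
  case (Suc j)
  note f = th_facts[OF a]
  define x where "x = e * sin t / sqrt a"
  define y where "y = e * cos t / sqrt (1 - a)"
  have s0: "sqrt a > 0" "a = (sqrt a)\<^sup>2" and c0: "sqrt (1 - a) > 0" using a by auto
  note sr = std_real[OF f(1)[symmetric] f(2)[symmetric] s0(1) c0 s0(2), of e t]
  have cpi: "cis pi = -1" by (simp add: complex_eq_iff)
  have "run X \<chi> A stdblk (comb \<chi> P (of_real x) (of_real y))
     = comb \<chi> P (of_real (-x + 2*x*a - 2*y*(1-a))) (of_real (y + 2*x*a - 2*y*(1-a)))"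
    unfolding stdblk_def P_def a_def step[OF fin z U] cpi
    by (simp add: comb_def fun_eq_iff algebra_simps)
  also have "\<dots> = comb \<chi> P (of_real ((-e) * sin (t + 2 * th a) / sqrt a))
                       (of_real ((-e) * cos (t + 2 * th a) / sqrt (1 - a)))"
    using sr unfolding x_def y_def by simp
  finally have st: "run X \<chi> A stdblk (comb \<chi> P (of_real x) (of_real y)) = \<dots>" .
  show ?case
    unfolding replicate_Suc concat.simps run_append x_def[symmetric] y_def[symmetric] st Suc.IH
    by (simp add: algebra_simps)
qed

lemma correct:
  fixes \<chi> :: "int \<Rightarrow> bool"
  assumes fin: "finite X" and z: "0 \<in> X" and U: "unitary_on X A"
  assumes a: "0 < good_prob X \<chi> (apply_op X A (ket X 0))"
  shows "good_prob X \<chi> (run X \<chi> A (alg (good_prob X \<chi> (apply_op X A (ket X 0)))) (ket X 0)) = 1"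
proof -
  define P where "P = apply_op X A (ket X 0)"
  define a where "a = good_prob X \<chi> P"
  have a0: "0 < a" using a by (simp add: a_def P_def)
  have a1: "a \<le> 1" using good_prob_le1[OF fin z U] by (simp add: a_def P_def)
  show ?thesis
  proof (cases "a < 1")
    case False
    then have "a = 1" using a1 by simp
    then show ?thesis using False by (simp add: alg_def a_def P_def)
  next
    case True
    note f = th_facts[OF a0 True]
    have s0: "sqrt a > 0" and c0: "sqrt (1 - a) > 0" using a0 True by auto
    have init: "run X \<chi> A [GateA] (ket X 0)
        = comb \<chi> P (of_real (1 * sin (th a) / sqrt a)) (of_real (1 * cos (th a) / sqrt (1 - a)))"
      using s0 c0 f by (simp add: comb_def P_def)
    define e where "e = ((-1::real) ^ mm a)"
    have tt: "th a + 2 * real (mm a) * th a = tt a" by (simp add: tt_def algebra_simps)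
    define x where "x = e * sin (tt a) / sqrt a"
    define y where "y = e * cos (tt a) / sqrt (1 - a)"
    have mid: "run X \<chi> A (GateA # concat (replicate (mm a) stdblk)) (ket X 0)
        = comb \<chi> P (of_real x) (of_real y)"
      using iter[OF fin z U, of \<chi>, folded P_def, folded a_def, OF a0 True, of "mm a" 1 "th a"]
      by (simp add: init[simplified] tt x_def y_def e_def)
    define s where "s = cis (p1 a) * of_real x * of_real a + of_real y * (1 - of_real a)"
    define \<alpha>' where "\<alpha>' = cis (p1 a) * of_real x + (cis (p2 a) - 1) * s"
    have bz: "of_real y + (cis (p2 a) - 1) * s = 0"
      using gadget_zero[OF a0 True, of e] unfolding s_def x_def y_def .
    have fin_state: "run X \<chi> A (alg a) (ket X 0) = comb \<chi> P \<alpha>' 0"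
    proof -
      have "run X \<chi> A (alg a) (ket X 0) = run X \<chi> A (gad a) (comb \<chi> P (of_real x) (of_real y))"
        using True mid by (simp add: alg_def run_append)
      also have "\<dots> = comb \<chi> P \<alpha>' (of_real y + (cis (p2 a) - 1) * s)"
        unfolding gad_def P_def step[OF fin z U] by (simp add: \<alpha>'_def s_def a_def P_def)
      finally show ?thesis using bz by simp
    qed
    have e2: "e\<^sup>2 = 1" by (simp add: e_def flip: power_mult power_mult_distrib)
    have "(cmod \<alpha>')\<^sup>2 * a + (cmod (0::complex))\<^sup>2 * (1 - a) = (cmod (of_real x :: complex))\<^sup>2 * a + (cmod (of_real y :: complex))\<^sup>2 * (1 - a)"
      using inv_step[of "p1 a" "of_real x" "p2 a" a "of_real y"] bz
      unfolding \<alpha>'_def s_def by simp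
    also have "\<dots> = x\<^sup>2 * a + y\<^sup>2 * (1 - a)" unfolding norm_of_real power2_abs ..
    also have "\<dots> = e\<^sup>2 * (sin (tt a))\<^sup>2 + e\<^sup>2 * (cos (tt a))\<^sup>2"
      using s0 c0 True a0 by (simp add: x_def y_def power_divide power_mult_distrib)
    also have "\<dots> = e\<^sup>2 * ((sin (tt a))\<^sup>2 + (cos (tt a))\<^sup>2)" by (simp only: distrib_left)
    also have "\<dots> = 1" using e2 by simp
    finally have "(cmod \<alpha>')\<^sup>2 * a = 1" by simp
    then show ?thesis using fin_state good_prob_comb[of X \<chi> P \<alpha>' 0]
      by (simp add: a_def P_def)
  qed
qed

theorem theorem3:
  "\<exists>alg :: real \<Rightarrow> gate list. \<exists>c1 c2 :: real. 0 < c1 \<and> 0 < c2 \<and>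
     (\<forall>a. 0 < a \<and> a \<le> 1 \<longrightarrow>
        c1 / sqrt a \<le> real (num_A_calls (alg a)) \<and>
        real (num_A_calls (alg a)) \<le> c2 / sqrt a) \<and>
     (\<forall>(X :: int set) (\<chi> :: int \<Rightarrow> bool) (A :: op).
        finite X \<longrightarrow> 0 \<in> X \<longrightarrow> (\<forall>x\<in>X. 0 \<le> x) \<longrightarrow> unitary_on X A \<longrightarrow>
        (let a = good_prob X \<chi> (apply_op X A (ket X 0)) in
          0 < a \<longrightarrow> good_prob X \<chi> (run X \<chi> A (alg a) (ket X 0)) = 1))"
proof (intro exI conjI allI impI)
  show "0 < (1/2::real)" "0 < (4::real)" by simp_all
  fix a :: real assume a: "0 < a \<and> a \<le> 1"
  show "1/2 / sqrt a \<le> real (num_A_calls (alg a))"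
  proof (cases "a < 1")
    case True then show ?thesis using count_bounds[of a] a by (simp add: num_alg)
  next
    case False then have "a = 1" using a by simp
    then show ?thesis by (simp add: num_alg)
  qed
  show "real (num_A_calls (alg a)) \<le> 4 / sqrt a"
  proof (cases "a < 1")
    case True then show ?thesis using count_bounds[of a] a by (simp add: num_alg)
  next
    case False then have "a = 1" using a by simp
    then show ?thesis by (simp add: num_alg)
  qed
next
  fix X :: "int set" and \<chi> :: "int \<Rightarrow> bool" and A :: op
  assume "finite X" "0 \<in> X" "\<forall>x\<in>X. 0 \<le> x" "unitary_on X A"
  then show "let a = good_prob X \<chi> (apply_op X A (ket X 0)) in
          0 < a \<longrightarrow> good_prob X \<chi> (run X \<chi> A (alg a) (ket X 0)) = 1"
    using correct[of X A \<chi>] by (simp add: Let_def)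
qed

end
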